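(* For any $\theta\in(0,1)$ there exist $\delta^*>0$ and a nonnegative $2\pi$-periodic function $W_\theta\in W^{1,\infty}$ with $W_\theta(x)=O(|x|^3)$ as $x\to0$ and $W_\theta(x)>0$ for $x\notin2\pi\mathbb Z$, such that the following holds. Let $x_0^*\in(-\delta^*,\delta^* )$, let $x^*(t)=2\arctan\big(e^{-t}\tan(x_0^*/2)\big)$, $\Omega^*(t)=[-\pi-x^*(t),\pi-x^*(t)]$, $\Omega^*_0=\Omega^*(0)$, and let $\varepsilon_0\in C^3(\Omega_0^* )$ with $\varepsilon_0(x)=O(|x|^3)$ as $x\to0$. Then the unique global solution $\varepsilon(t)=e^{tL}\varepsilon_0$ of $$\partial_t\varepsilon=L(\varepsilon)\ \text{ on }\Omega^*(t),\qquad \varepsilon(0)=\varepsilon_0\text{ on }\Omega^*_0,\qquad L(\varepsilon)=2\cos(x)\varepsilon-\sin(x)\partial_x\varepsilon+\sin(x)\int_0^x\varepsilon(t,\bar x)\,d\bar x,$$ satisfies for all $t\ge0$ $$\Big\|\frac{e^{tL}\varepsilon_0}{W_\theta}\Big\|_{L^\infty(\Omega^*(t))}\le e^{-(1-\theta)t}\Big\|\frac{\varepsilon_0}{W_\theta}\Big\|_{L^\infty(\Omega^*_0)}.$$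
   Context: $\Omega^*(t)$ is the image of $\Omega_0^*$ under the flow $\dot X=\sin X$, i.e. its endpoints $\pm\pi-x^*(t)$ solve this ODE. *)

theory Defs
  imports "HOL-Analysis.Analysis" "HOL-Library.Landau_Symbols"
begin

text \<open>Three times continuously differentiable on a set S (one-sided derivatives at the
  endpoints of a closed interval, via derivatives within S).\<close>
definition C3_on :: "real set \<Rightarrow> (real \<Rightarrow> real) \<Rightarrow> bool" where
  "C3_on S f \<longleftrightarrow> (\<exists>f1 f2 f3. continuous_on S f3 \<and>
     (\<forall>x\<in>S. (f has_real_derivative f1 x) (at x within S) \<and>
             (f1 has_real_derivative f2 x) (at x within S) \<and>
             (f2 has_real_derivative f3 x) (at x within S)))"

text \<open>W^{1,infinity}(R): bounded and Lipschitz.\<close>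
definition W1inf :: "(real \<Rightarrow> real) \<Rightarrow> bool" where
  "W1inf f \<longleftrightarrow> bounded (range f) \<and> (\<exists>C. C-lipschitz_on UNIV f)"

definition xstar :: "real \<Rightarrow> real \<Rightarrow> real" where
  "xstar x0 t = 2 * arctan (exp (- t) * tan (x0 / 2))"

definition Omega :: "real \<Rightarrow> real \<Rightarrow> real set" where
  "Omega x0 t = {- pi - xstar x0 t .. pi - xstar x0 t}"

text \<open>Weighted sup norm || f / W ||_{L^infinity(S)} as an extended real
  (infinite if the quotient is unbounded; at zeros of W the quotient is 0 by
  Isabelle's convention x/0 = 0).\<close>
definition wnorm :: "(real \<Rightarrow> real) \<Rightarrow> (real \<Rightarrow> real) \<Rightarrow> real set \<Rightarrow> ereal" where
  "wnorm f W S = (SUP x\<in>S. ereal \<bar>f x / W x\<bar>)"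

text \<open>The operator L applied to u at time t, point x, given u_x(x) = ux.\<close>
definition Lop :: "(real \<Rightarrow> real) \<Rightarrow> real \<Rightarrow> real \<Rightarrow> real" where
  "Lop u ux x = 2 * cos x * u x - sin x * ux + sin x * (LBINT y=0..x. u y)"

end

theory Submission
  imports Defs
begin


definition Wf :: "real \<Rightarrow> real" where "Wf x = ((1 - cos x) / 2)^2"
definition Wd :: "real \<Rightarrow> real" where "Wd x = (1 - cos x) * sin x / 2"

lemma Wf_deriv: "(Wf has_real_derivative Wd x) (at x within S)"
  unfolding Wf_def Wd_def
  by (auto intro!: derivative_eq_intros simp: field_simps power2_eq_square)

lemma Wf_nonneg: "Wf x \<ge> 0" by (simp add: Wf_def)
lemma Wf_le1: "Wf x \<le> 1"
proof -
  have "0 \<le> (1 - cos x)/2" "(1 - cos x)/2 \<le> 1" using cos_le_one[of x] cos_ge_minus_one[of x] by auto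
  then show ?thesis unfolding Wf_def by (simp add: power_le_one)
qed
lemma Wf_even: "Wf (-x) = Wf x" by (simp add: Wf_def)
lemma Wf_per: "Wf (x + 2*pi) = Wf x" by (simp add: Wf_def)
lemma Wf_cont: "continuous_on S Wf" unfolding Wf_def by (intro continuous_intros) auto
lemma Wd_bound: "\<bar>Wd x\<bar> \<le> 1"
proof -
  have "\<bar>1 - cos x\<bar> \<le> 2" "\<bar>sin x\<bar> \<le> 1" using cos_le_one[of x] cos_ge_minus_one[of x] abs_sin_le_one[of x] by auto
  then have "\<bar>(1 - cos x) * sin x\<bar> \<le> 2 * 1" unfolding abs_mult by (intro mult_mono) auto
  then show ?thesis unfolding Wd_def by simp
qed

lemma Wf_pos: assumes "\<not> (\<exists>k::int. x = 2 * pi * of_int k)" shows "Wf x > 0"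
proof -
  have "cos x \<noteq> 1" using assms cos_one_2pi_int[of x] by (auto simp: mult.commute mult.left_commute)
  then have "cos x < 1" using cos_le_one[of x] by linarith
  then show ?thesis by (simp add: Wf_def)
qed

lemma Wf_lip: "1-lipschitz_on UNIV Wf"
proof (rule lipschitz_onI)
  fix x y :: real
  have "\<bar>Wf x - Wf y\<bar> \<le> 1 * \<bar>x - y\<bar>"
  proof (cases "x = y")
    case False
    show ?thesis
    proof (cases "x < y")
      case True
      from MVT2[OF True, of Wf Wd] Wf_deriv obtain z where "Wf y - Wf x = (y - x) * Wd z" by blast
      then have "\<bar>Wf x - Wf y\<bar> = \<bar>y - x\<bar> * \<bar>Wd z\<bar>" by (metis abs_minus_commute abs_mult)
      then show ?thesis using Wd_bound[of z] by (simp add: mult_left_le abs_minus_commute)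
    next
      case f: False
      then have "y < x" using False by simp
      from MVT2[OF this, of Wf Wd] Wf_deriv obtain z where "Wf x - Wf y = (x - y) * Wd z" by blast
      then have "\<bar>Wf x - Wf y\<bar> = \<bar>x - y\<bar> * \<bar>Wd z\<bar>" by (simp add: abs_mult)
      then show ?thesis using Wd_bound[of z] by (simp add: mult_left_le)
    qed
  qed simp
  then show "dist (Wf x) (Wf y) \<le> 1 * dist x y" by (simp add: dist_real_def)
qed simp

lemma Wf_W1inf: "W1inf Wf"
  unfolding W1inf_def
proof
  show "bounded (range Wf)" unfolding bounded_iff using Wf_nonneg Wf_le1 by (metis abs_of_nonneg rangeE real_norm_def)
  show "\<exists>C. C-lipschitz_on UNIV Wf" using Wf_lip by blast
qed

lemma Wf_bigo: "Wf \<in> O[at 0](\<lambda>x. \<bar>x\<bar> ^ 3)"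
proof (rule bigoI[where c=1])
  have "eventually (\<lambda>x::real. \<bar>x\<bar> < 1) (at 0)"
    using eventually_at_ball[of 1 "0::real" UNIV] by (auto simp: dist_real_def elim: eventually_mono)
  then show "eventually (\<lambda>x. norm (Wf x) \<le> 1 * norm (\<bar>x\<bar> ^ 3)) (at 0)"
  proof (rule eventually_mono)
    fix x :: real assume x: "\<bar>x\<bar> < 1"
    have e: "1 - cos x = 2 * sin (x/2) ^ 2" using cos_double_sin[of "x/2"] by simp
    have "sin (x/2) ^ 2 \<le> (x/2)^2" using abs_sin_x_le_abs_x[of "x/2"]
      by (metis abs_ge_zero power2_abs power_mono)
    then have c: "0 \<le> (1 - cos x)/2" "(1 - cos x)/2 \<le> x^2/4" using e by (auto simp: power_divide)
    then have "Wf x \<le> (x^2/4)^2" unfolding Wf_def by (intro power_mono) auto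
    also have "\<dots> = \<bar>x\<bar>^3 * (\<bar>x\<bar> / 16)" by (simp add: power2_eq_square power3_eq_cube field_simps)
    also have "\<dots> \<le> \<bar>x\<bar>^3 * 1" using x by (intro mult_left_mono) auto
    finally show "norm (Wf x) \<le> 1 * norm (\<bar>x\<bar> ^ 3)" using Wf_nonneg[of x] by simp
  qed
qed

lemma tan_half_ineq:
  assumes "0 \<le> u" "u \<le> x" "x \<le> pi"
  shows "(1 - cos u) * sin x \<le> (1 - cos x) * sin u"
proof -
  have f1: "sin u * cos (x - u) + cos u * sin (x - u) = sin x" using sin_add[of u "x-u"] by simp
  have f2: "sin x * cos u - cos x * sin u = sin (x - u)" using sin_diff[of x u] by simp
  have e: "(1 - cos x) * sin u - (1 - cos u) * sin x = sin u * (1 - cos (x - u)) + sin (x - u) * (1 - cos u)"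
    using f1 f2 by (simp add: algebra_simps)
  have "sin u \<ge> 0" using assms by (intro sin_ge_zero) auto
  moreover have "sin (x - u) \<ge> 0" using assms by (intro sin_ge_zero) auto
  ultimately have "sin u * (1 - cos (x - u)) + sin (x - u) * (1 - cos u) \<ge> 0"
    using cos_le_one[of "x-u"] cos_le_one[of u] by (intro add_nonneg_nonneg mult_nonneg_nonneg) auto
  then show ?thesis using e by linarith
qed

lemma W_int_pos:
  assumes "0 \<le> x" "x \<le> pi"
  shows "sin x * integral {0..x} Wf \<le> (1 - cos x)/2 * Wf x"
proof -
  have ftc: "(Wd has_integral (Wf x - Wf 0)) {0..x}"
    using assms Wf_deriv
    by (intro fundamental_theorem_of_calculus) (auto simp: has_real_derivative_iff_has_vector_derivative[symmetric])
  have i1: "(\<lambda>u. sin x * Wf u) integrable_on {0..x}"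
    by (intro integrable_continuous_real continuous_intros Wf_cont)
  have ftc2: "((\<lambda>u. (1 - cos x)/2 * Wd u) has_integral ((1 - cos x)/2 * (Wf x - Wf 0))) {0..x}"
    using ftc by (rule has_integral_mult_right)
  then have i2: "(\<lambda>u. (1 - cos x)/2 * Wd u) integrable_on {0..x}" by blast
  have pt: "sin x * Wf u \<le> (1 - cos x)/2 * Wd u" if "u \<in> {0..x}" for u
  proof -
    have t: "(1 - cos u) * sin x \<le> (1 - cos x) * sin u" using that assms by (intro tan_half_ineq) auto
    have "0 \<le> 1 - cos u" using cos_le_one[of u] by simp
    then have "(1 - cos u) * ((1 - cos u) * sin x) \<le> (1 - cos u) * ((1 - cos x) * sin u)"
      by (rule mult_left_mono[OF t])
    then show ?thesis unfolding Wf_def Wd_def by (simp add: power2_eq_square field_simps)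
  qed
  have "integral {0..x} (\<lambda>u. sin x * Wf u) \<le> integral {0..x} (\<lambda>u. (1 - cos x)/2 * Wd u)"
    using i1 i2 pt by (rule integral_le)
  also have "\<dots> = (1 - cos x)/2 * (Wf x - Wf 0)" using ftc2 by (rule integral_unique)
  finally have "sin x * integral {0..x} Wf \<le> (1 - cos x)/2 * (Wf x - Wf 0)" by simp
  moreover have "Wf 0 = 0" by (simp add: Wf_def)
  ultimately show ?thesis by simp
qed

lemma W_int_bound_pos:
  assumes "0 \<le> x" "x < pi + 1/10"
  shows "\<bar>sin x\<bar> * integral {0..x} Wf \<le> Wf x"
proof (cases "x \<le> pi")
  case True
  have "sin x \<ge> 0" using True assms by (intro sin_ge_zero) auto
  then have "\<bar>sin x\<bar> * integral {0..x} Wf \<le> (1 - cos x)/2 * Wf x" using W_int_pos[OF assms(1) True] by simp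
  also have "\<dots> \<le> 1 * Wf x" using cos_ge_minus_one[of x] Wf_nonneg[of x] by (intro mult_right_mono) auto
  finally show ?thesis by simp
next
  case False
  define h where "h = x - pi"
  have h: "0 < h" "h < 1/10" using False assms by (auto simp: h_def)
  have sx: "\<bar>sin x\<bar> \<le> h" using abs_sin_x_le_abs_x[of h] h by (simp add: h_def sin_diff)
  have "integral {0..x} Wf \<le> integral {0..x} (\<lambda>_. 1::real)"
    by (intro integral_le integrable_continuous_real Wf_cont continuous_intros) (auto simp: Wf_le1)
  also have "\<dots> = x" using assms by simp
  finally have ix: "integral {0..x} Wf \<le> 5" using assms pi_less_4 by linarith
  have inn: "integral {0..x} Wf \<ge> 0" by (intro integral_nonneg integrable_continuous_real Wf_cont) (auto simp: Wf_nonneg)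
  have e: "1 - cos h = 2 * sin (h/2) ^ 2" using cos_double_sin[of "h/2"] by simp
  have "sin (h/2) ^ 2 \<le> (h/2)^2" using abs_sin_x_le_abs_x[of "h/2"]
    by (metis abs_ge_zero power2_abs power_mono)
  then have "1 - cos h \<le> h^2/2" using e by (simp add: power_divide)
  moreover have "h*h \<le> (1/10)*(1/10)" using h by (intro mult_mono) auto
  then have "h^2 \<le> 1/100" by (simp add: power2_eq_square)
  moreover have "cos x = - cos h" by (simp add: h_def cos_diff)
  ultimately have cx: "cos x \<le> - 99/100" by linarith
  then have "(99/100) \<le> (1 - cos x)/2" by simp
  then have "(99/100)^2 \<le> ((1 - cos x)/2)^2" by (intro power_mono) auto
  then have wx: "Wf x \<ge> 98/100" unfolding Wf_def by (simp add: power2_eq_square)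
  have "\<bar>sin x\<bar> * integral {0..x} Wf \<le> (1/10) * 5" using sx h ix inn by (intro mult_mono) auto
  then show ?thesis using wx by linarith
qed

lemma W_int_bound:
  assumes "\<bar>x\<bar> < pi + 1/10"
  shows "\<bar>sin x\<bar> * integral {min 0 x..max 0 x} Wf \<le> Wf x"
proof (cases "x \<ge> 0")
  case True then show ?thesis using W_int_bound_pos[of x] assms by simp
next
  case False
  have r: "integral {- (-x)..- 0} (\<lambda>u. Wf (- u)) = integral {0..-x} Wf" by (rule Henstock_Kurzweil_Integration.integral_reflect_real)
  have fe: "(\<lambda>u. Wf (-u)) = Wf" by (rule ext) (simp add: Wf_even)
  have "integral {x..0} Wf = integral {0..-x} Wf" using r unfolding fe by (simp only: minus_minus minus_zero)
  then have "integral {min 0 x..max 0 x} Wf = integral {0..-x} Wf" using False by simp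
  then show ?thesis using W_int_bound_pos[of "-x"] assms False by (simp add: Wf_even)
qed

lemma lbint_bound:
  fixes f g :: "real \<Rightarrow> real"
  assumes "continuous_on {min 0 x..max 0 x} f" "continuous_on {min 0 x..max 0 x} g"
    "\<And>u. u \<in> {min 0 x..max 0 x} \<Longrightarrow> \<bar>f u\<bar> \<le> g u"
  shows "\<bar>LBINT u=0..x. f u\<bar> \<le> integral {min 0 x..max 0 x} g"
proof -
  let ?I = "{min 0 x..max 0 x}"
  have "LBINT u=min 0 x..max 0 x. f u = integral ?I f"
    by (intro interval_integral_eq_integral borel_integrable_atLeastAtMost' assms) auto
  moreover have "\<bar>LBINT u=0..x. f u\<bar> = \<bar>LBINT u=min 0 x..max 0 x. f u\<bar>"
  proof (cases "x \<ge> 0")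
    case False
    have "(LBINT u=0..x. f u) = - (LBINT u=x..0. f u)" by (rule interval_integral_endpoints_reverse)
    then show ?thesis using False by (simp add: min_def max_def zero_ereal_def)
  qed (simp add: min_def max_def zero_ereal_def)
  moreover have "norm (integral ?I f) \<le> integral ?I g"
    using assms by (intro integral_norm_bound_integral integrable_continuous_real) auto
  ultimately show ?thesis by simp
qed


lemma sin_2arctan: "sin (2 * arctan z) = 2 * z / (1 + z^2)"
proof -
  have p: "sqrt (1 + z^2) * sqrt (1 + z^2) = 1 + z^2" by (simp add: add_pos_nonneg)
  have "sin (2 * arctan z) = 2 * (z / sqrt (1 + z^2)) * (1 / sqrt (1 + z^2))"
    by (simp add: sin_double sin_arctan cos_arctan)
  also have "\<dots> = 2 * z / (sqrt (1 + z^2) * sqrt (1 + z^2))" by simp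
  finally show ?thesis using p by simp
qed

lemma xstar_deriv: "((\<lambda>t. xstar x0 t) has_real_derivative - sin (xstar x0 t)) (at t within S)"
proof -
  let ?z = "exp (- t) * tan (x0 / 2)"
  have "((\<lambda>t. xstar x0 t) has_real_derivative 2 * (inverse (1 + ?z^2) * (- exp (- t) * tan (x0/2)))) (at t within S)"
    unfolding xstar_def
    by (auto intro!: derivative_eq_intros simp: power2_eq_square)
  moreover have "2 * (inverse (1 + ?z^2) * (- exp (- t) * tan (x0/2))) = - sin (xstar x0 t)"
    unfolding xstar_def sin_2arctan by (simp add: field_simps)
  ultimately show ?thesis by simp
qed

lemma xstar_cont: "continuous_on S (xstar x0)"
  using xstar_deriv by (meson DERIV_continuous continuous_at_imp_continuous_on)

lemma xstar_0: assumes "\<bar>x0\<bar> < pi" shows "xstar x0 0 = x0"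
proof -
  have "arctan (tan (x0/2)) = x0/2" using assms by (intro arctan_tan) auto
  then show ?thesis by (simp add: xstar_def)
qed

lemma xstar_bound: assumes "\<bar>x0\<bar> < pi" "0 \<le> t" shows "\<bar>xstar x0 t\<bar> \<le> \<bar>x0\<bar>"
proof -
  have e: "\<bar>arctan a\<bar> = arctan \<bar>a\<bar>" for a
    by (cases "a \<ge> 0") (auto simp: arctan_minus arctan_le_zero_iff)
  have "\<bar>exp (-t) * tan (x0/2)\<bar> \<le> \<bar>tan (x0/2)\<bar>" using assms
    by (simp add: abs_mult mult_left_le_one_le)
  then have "arctan \<bar>exp (-t) * tan (x0/2)\<bar> \<le> arctan \<bar>tan (x0/2)\<bar>" by (simp add: arctan_le_iff)
  moreover have "arctan (tan (x0/2)) = x0/2" using assms by (intro arctan_tan) auto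
  ultimately have "\<bar>arctan (exp (-t) * tan (x0/2))\<bar> \<le> \<bar>x0/2\<bar>" using e by metis
  then show ?thesis unfolding xstar_def by simp
qed


definition bet :: "real \<Rightarrow> real" where "bet y = 1 / cos (y/2)"
definition bd :: "real \<Rightarrow> real" where "bd y = sin (y/2) / (2 * cos (y/2)^2)"

lemma cos_half_pos: "\<bar>y\<bar> < pi \<Longrightarrow> cos (y/2) > 0"
  by (intro cos_gt_zero_pi) auto

lemma bet_deriv: assumes "\<bar>y\<bar> < pi" shows "(bet has_real_derivative bd y) (at y within S)"
  using cos_half_pos[OF assms] unfolding bet_def bd_def
  by (auto intro!: derivative_eq_intros simp: power2_eq_square field_simps)

lemma bet_ge1: assumes "\<bar>y\<bar> < pi" shows "bet y \<ge> 1"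
  using cos_half_pos[OF assms] cos_le_one[of "y/2"] unfolding bet_def by (simp add: le_divide_eq)

lemma bet_mono: assumes "\<bar>a\<bar> \<le> \<bar>b\<bar>" "\<bar>b\<bar> < pi" shows "bet a \<le> bet b"
proof -
  have "cos (\<bar>b\<bar>/2) \<le> cos (\<bar>a\<bar>/2)" using assms by (intro cos_monotone_0_pi_le) auto
  moreover have "cos (\<bar>b\<bar>/2) = cos (b/2)" "cos (\<bar>a\<bar>/2) = cos (a/2)"
    using cos_abs_real[of "b/2"] cos_abs_real[of "a/2"] by simp_all
  moreover have "cos (b/2) > 0" using cos_half_pos assms by simp
  ultimately show ?thesis unfolding bet_def by (simp add: frac_le)
qed

lemma one_minus_cos_le: "1 - cos (h::real) \<le> h^2/2"
proof -
  have e: "1 - cos h = 2 * sin (h/2) ^ 2" using cos_double_sin[of "h/2"] by simp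
  have "sin (h/2) ^ 2 \<le> (h/2)^2" using abs_sin_x_le_abs_x[of "h/2"]
    by (metis abs_ge_zero power2_abs power_mono)
  then show ?thesis using e by (simp add: power_divide)
qed

lemma bet_small: assumes "\<bar>v\<bar> \<le> 1/10" shows "bet v \<le> 2"
proof -
  have "\<bar>v/2\<bar>^2 \<le> (1/20)^2" using assms by (intro power_mono) auto
  then have "(v/2)^2 \<le> (1/20)^2" by (metis power2_abs)
  then have "1 - cos (v/2) \<le> 1/2" using one_minus_cos_le[of "v/2"] by (simp add: power2_eq_square)
  then show ?thesis unfolding bet_def by (simp add: divide_le_eq)
qed

lemma bd_key:
  assumes "\<bar>y\<bar> < pi" "cos xs \<ge> 0"
  shows "bd y * (sin (y - xs) - sin xs) \<ge> -1"
proof -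
  define c where "c = cos (y/2)"
  define s where "s = sin (y/2)"
  have c0: "c > 0" using cos_half_pos[OF assms(1)] by (simp add: c_def)
  have sc: "s^2 + c^2 = 1" by (simp add: s_def c_def)
  have sy: "sin y = 2 * s * c" using sin_double[of "y/2"] by (simp add: s_def c_def)
  have cy: "cos y = c^2 - s^2" using cos_double[of "y/2"] by (simp add: s_def c_def)
  have "sin (y - xs) - sin xs = 2 * s * c * cos xs - (c^2 - s^2) * sin xs - (s^2 + c^2) * sin xs"
    by (simp add: sin_diff sy cy sc)
  also have "\<dots> = 2 * c * (s * cos xs - c * sin xs)" by (simp add: algebra_simps power2_eq_square)
  finally have e: "bd y * (sin (y - xs) - sin xs) = s / (2*c^2) * (2 * c * (s * cos xs - c * sin xs))"
    by (simp add: bd_def s_def c_def)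
  also have "\<dots> = s^2 * cos xs / c - s * sin xs" using c0 by (simp add: field_simps power2_eq_square)
  finally have e2: "bd y * (sin (y - xs) - sin xs) = s^2 * cos xs / c - s * sin xs" .
  have "s^2 * cos xs / c \<ge> 0" using c0 assms by simp
  moreover have "\<bar>s * sin xs\<bar> \<le> 1 * 1" unfolding abs_mult s_def
    by (intro mult_mono) auto
  ultimately show ?thesis using e2 by linarith
qed

lemma W_ident: "2 * cos x * Wf x - sin x * Wd x = - 2 * Wf x"
proof -
  have s2: "sin x ^ 2 = 1 - cos x ^ 2" by (rule sin_squared_eq)
  have "sin x * Wd x = (1 - cos x) * (sin x)^2 / 2" unfolding Wd_def by (simp add: power2_eq_square)
  also have "\<dots> = (1 - cos x) * (1 - cos x ^ 2) / 2" by (simp add: s2)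
  finally show ?thesis unfolding Wf_def by (simp add: power2_eq_square field_simps)
qed

lemma super:
  assumes xs: "\<bar>xs\<bar> \<le> 1/10" and y: "\<bar>y\<bar> < pi" and lam: "0 \<le> lam" "lam \<le> 1" and A: "0 \<le> A" and B: "0 < B"
  shows "2 * cos (y - xs) * (A * Wf (y - xs) + B * bet y) - sin (y - xs) * (A * Wd (y - xs) + B * bd y)
     + \<bar>sin (y - xs)\<bar> * (A * integral {min 0 (y - xs)..max 0 (y - xs)} Wf + B * (2 * \<bar>y - xs\<bar> * bet y))
     < - lam * A * Wf (y - xs) + B * (13 * bet y + bd y * (- sin xs))"
proof -
  define x where "x = y - xs"
  have xb: "\<bar>x\<bar> < pi + 1/10" using xs y by (simp add: x_def)
  have x4: "\<bar>x\<bar> \<le> 4.1" using xb pi_less_4 by linarith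
  have W1: "2 * cos x * Wf x - sin x * Wd x + \<bar>sin x\<bar> * integral {min 0 x..max 0 x} Wf \<le> - lam * Wf x"
  proof -
    have "lam * Wf x \<le> Wf x" using Wf_nonneg[of x] lam by (simp add: mult_left_le_one_le)
    then show ?thesis using W_ident[of x] W_int_bound[OF xb] by linarith
  qed
  have cxs: "cos xs \<ge> 0" using xs pi_gt3 by (intro cos_ge_zero) auto
  have bk: "bd y * (sin x - sin xs) \<ge> -1" using bd_key[OF y cxs] by (simp add: x_def)
  have b1: "bet y \<ge> 1" using bet_ge1[OF y] .
  have t1: "2 * cos x * bet y \<le> 2 * bet y" using b1 cos_le_one[of x] by simp
  have t2: "\<bar>sin x\<bar> * (2 * \<bar>x\<bar> * bet y) \<le> 1 * (2 * 4.1 * bet y)"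
    using b1 x4 abs_sin_le_one[of x] by (intro mult_mono) auto
  have W2: "2 * cos x * bet y - sin x * bd y + \<bar>sin x\<bar> * (2 * \<bar>x\<bar> * bet y) < 13 * bet y + bd y * (- sin xs)"
  proof -
    have bk': "bd y * sin x - bd y * sin xs \<ge> -1" using bk by (simp add: right_diff_distrib)
    have "sin x * bd y = bd y * sin x" "bd y * (- sin xs) = - (bd y * sin xs)" by simp_all
    then show ?thesis using bk' b1 t1 t2 by linarith
  qed
  have "2 * cos x * (A * Wf x + B * bet y) - sin x * (A * Wd x + B * bd y)
     + \<bar>sin x\<bar> * (A * integral {min 0 x..max 0 x} Wf + B * (2 * \<bar>x\<bar> * bet y))
     = A * (2 * cos x * Wf x - sin x * Wd x + \<bar>sin x\<bar> * integral {min 0 x..max 0 x} Wf)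
       + B * (2 * cos x * bet y - sin x * bd y + \<bar>sin x\<bar> * (2 * \<bar>x\<bar> * bet y))" by (simp add: algebra_simps)
  also have "\<dots> < A * (- lam * Wf x) + B * (13 * bet y + bd y * (- sin xs))"
  proof -
    have "A * (2 * cos x * Wf x - sin x * Wd x + \<bar>sin x\<bar> * integral {min 0 x..max 0 x} Wf) \<le> A * (- lam * Wf x)"
      using W1 A by (rule mult_left_mono)
    moreover have "B * (2 * cos x * bet y - sin x * bd y + \<bar>sin x\<bar> * (2 * \<bar>x\<bar> * bet y)) < B * (13 * bet y + bd y * (- sin xs))"
      using W2 B by (rule mult_strict_left_mono)
    ultimately show ?thesis by linarith
  qed
  also have "A * (- lam * Wf x) = - lam * A * Wf x" by simp
  finally show ?thesis by (simp add: x_def)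
qed



lemma omega_iff: "x \<in> Omega x0 t \<longleftrightarrow> \<bar>x + xstar x0 t\<bar> \<le> pi"
  unfolding Omega_def by auto

lemma interior_omega_iff: "x \<in> interior (Omega x0 t) \<longleftrightarrow> \<bar>x + xstar x0 t\<bar> < pi"
  unfolding Omega_def interior_atLeastAtMost_real by auto

lemma stepA:
  fixes x0 lam m eta :: real and eps0 :: "real \<Rightarrow> real" and eps :: "real \<Rightarrow> real \<Rightarrow> real"
  assumes x0: "\<bar>x0\<bar> < 1/10" and lam: "0 \<le> lam" "lam \<le> 1" and m: "0 \<le> m" and eta: "0 < eta"
    and init: "\<forall>x\<in>Omega x0 0. \<bar>eps0 x\<bar> \<le> m * Wf x"
    and at0: "\<forall>x\<in>Omega x0 0. eps 0 x = eps0 x"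
    and cont: "continuous_on {(t, x). 0 \<le> t \<and> x \<in> Omega x0 t} (\<lambda>(t, x). eps t x)"
    and pde: "\<forall>t x. 0 < t \<longrightarrow> x \<in> interior (Omega x0 t) \<longrightarrow>
           (\<exists>et ex. ((\<lambda>s. eps s x) has_real_derivative et) (at t) \<and>
                    ((\<lambda>y. eps t y) has_real_derivative ex) (at x) \<and>
                    et = Lop (eps t) ex x)"
  shows "\<forall>t\<ge>0. \<forall>x. \<bar>x + xstar x0 t\<bar> < pi \<longrightarrow>
     \<bar>eps t x\<bar> < exp (- lam * t) * (m + eta) * Wf x + eta * exp (13 * t) * bet (x + xstar x0 t)"
proof (rule ccontr)
  define xs where "xs = xstar x0"
  define Phi where "Phi t x = exp (- lam * t) * (m + eta) * Wf x + eta * exp (13 * t) * bet (x + xs t)" for t x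
  have x0pi: "\<bar>x0\<bar> < pi" using x0 pi_gt3 by linarith
  have xsb: "\<bar>xs t\<bar> \<le> 1/10" if "0 \<le> t" for t
    using xstar_bound[OF x0pi that] x0 by (simp add: xs_def)
  have xs_cont: "continuous_on S xs" for S unfolding xs_def by (rule xstar_cont)
  have xs_isCont: "isCont xs t" for t using xs_cont[of UNIV] by (simp add: continuous_on_eq_continuous_at)
  have Phi_lb: "Phi t x \<ge> eta * bet (x + xs t)" if "\<bar>x + xs t\<bar> < pi" "0 \<le> t" for t x
  proof -
    have "exp (- lam * t) * (m + eta) * Wf x \<ge> 0" using m eta Wf_nonneg[of x] by simp
    moreover have "eta * exp (13 * t) * bet (x + xs t) \<ge> eta * 1 * bet (x + xs t)"
      using that eta bet_ge1[OF that(1)] by (intro mult_right_mono mult_left_mono) auto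
    ultimately show ?thesis unfolding Phi_def by simp
  qed
  assume "\<not> ?thesis"
  then obtain t2 x2 where t2: "0 \<le> t2" "\<bar>x2 + xs t2\<bar> < pi" and viol2: "\<bar>eps t2 x2\<bar> \<ge> Phi t2 x2"
    unfolding Phi_def xs_def by auto
  define E where "E p = eps (fst p) (snd p - xs (fst p))" for p
  define DT where "DT = {0..t2} \<times> {-pi..pi}"
  have E_cont: "continuous_on DT E"
  proof -
    have "continuous_on DT (\<lambda>p. (\<lambda>(t, x). eps t x) (fst p, snd p - xs (fst p)))"
      apply (rule continuous_on_compose2[OF cont])
       apply (intro continuous_intros continuous_on_compose2[OF xs_cont[of UNIV]]; simp)
      by (auto simp: DT_def omega_iff xs_def)
    then show ?thesis by (simp add: E_def)
  qed
  have "compact DT" unfolding DT_def by (intro compact_Times compact_Icc)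
  then have "compact (E ` DT)" using compact_continuous_image[OF E_cont] by blast
  then have "bounded (E ` DT)" by (rule compact_imp_bounded)
  then obtain C where "\<forall>v\<in>E ` DT. norm v \<le> C" unfolding bounded_iff by blast
  then have C: "\<forall>p\<in>DT. \<bar>E p\<bar> \<le> C" by simp
  define C' where "C' = \<bar>C\<bar> + 1"
  have C'pos: "C' > 0" by (simp add: C'_def)
  define c where "c = eta / C'"
  have cpos: "c > 0" using eta C'pos by (simp add: c_def)
  define Y where "Y = {-pi..pi} \<inter> {y. c \<le> cos (y/2)}"
  have Y_int: "\<bar>y\<bar> < pi" if "y \<in> Y" for y
  proof (rule ccontr)
    assume "\<not> \<bar>y\<bar> < pi"
    then have "y = pi \<or> y = -pi" using that by (auto simp: Y_def)
    then have "cos (y/2) = 0" by auto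
    then show False using that cpos by (auto simp: Y_def)
  qed
  have Y_closed: "closed Y" unfolding Y_def
    by (intro closed_Int closed_atLeastAtMost closed_Collect_le continuous_intros) auto
  define K0 where "K0 = {0..t2} \<times> Y"
  have K0_compact: "compact K0" unfolding K0_def Y_def
    by (intro compact_Times compact_Icc compact_Int_closed closed_Collect_le continuous_intros) auto
  define G where "G p = \<bar>E p\<bar> - Phi (fst p) (snd p - xs (fst p))" for p
  have G_cont: "continuous_on K0 G"
  proof -
    have sub: "K0 \<subseteq> DT" by (auto simp: K0_def DT_def Y_def)
    have "continuous_on K0 (\<lambda>p. \<bar>E p\<bar>)" using continuous_on_subset[OF E_cont sub] by (intro continuous_intros)
    moreover have "continuous_on K0 (\<lambda>p. Phi (fst p) (snd p - xs (fst p)))"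
    proof -
      have cz: "\<forall>p\<in>K0. cos (snd p / 2) \<noteq> 0" using Y_int cos_half_pos by (fastforce simp: K0_def)
      have "continuous_on K0 (\<lambda>p. exp (- lam * fst p) * (m + eta) * Wf (snd p - xs (fst p)) + eta * exp (13 * fst p) * bet (snd p))"
        unfolding bet_def
        by (intro continuous_intros continuous_on_compose2[OF Wf_cont[of UNIV]] continuous_on_compose2[OF xs_cont[of UNIV]] cz) auto
      then show ?thesis by (simp add: Phi_def)
    qed
    ultimately show ?thesis unfolding G_def by (rule continuous_on_diff)
  qed
  define S where "S = K0 \<inter> G -` {0..}"
  have S_compact: "compact S"
  proof -
    have "closed K0" using K0_compact by (rule compact_imp_closed)
    then have "closed S" unfolding S_def using G_cont by (intro continuous_closed_preimage) auto
    have "S = K0 \<inter> S" by (auto simp: S_def)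
    then show ?thesis using compact_Int_closed[OF K0_compact \<open>closed S\<close>] by simp
  qed
  have inS: "(t, x + xs t) \<in> S" if "0 \<le> t" "t \<le> t2" "\<bar>x + xs t\<bar> < pi" "\<bar>eps t x\<bar> \<ge> Phi t x" for t x
  proof -
    have "(t, x + xs t) \<in> DT" using that by (auto simp: DT_def)
    then have "\<bar>eps t x\<bar> \<le> C" using C by (auto simp: E_def)
    then have "eta * bet (x + xs t) \<le> C'" using Phi_lb[OF that(3,1)] that(4) by (simp add: C'_def)
    then have "eta / cos ((x + xs t)/2) \<le> C'" by (simp add: bet_def)
    then have "c \<le> cos ((x + xs t)/2)" using cos_half_pos[OF that(3)] C'pos
      by (simp add: c_def divide_le_eq mult.commute)
    then have "x + xs t \<in> Y" using that(3) by (auto simp: Y_def)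
    then show ?thesis using that by (auto simp: S_def K0_def G_def E_def)
  qed
  have "(t2, x2 + xs t2) \<in> S" using inS[OF t2(1) order_refl t2(2) viol2] .
  then have "fst ` S \<noteq> {}" by blast
  moreover have "compact (fst ` S)" using S_compact by (intro compact_continuous_image continuous_intros)
  ultimately obtain t1 where t1S: "t1 \<in> fst ` S" and t1min: "\<forall>t\<in>fst ` S. t1 \<le> t"
    using compact_attains_inf by blast
  then obtain y1 where ty1: "(t1, y1) \<in> S" by auto
  then have t1r: "0 \<le> t1" "t1 \<le> t2" and y1Y: "y1 \<in> Y" and G1: "G (t1, y1) \<ge> 0" by (auto simp: S_def K0_def)
  have y1: "\<bar>y1\<bar> < pi" using Y_int[OF y1Y] .
  define x1 where "x1 = y1 - xs t1"
  have x1y: "x1 + xs t1 = y1" by (simp add: x1_def)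
  have V: "\<bar>eps t x\<bar> < Phi t x" if "0 \<le> t" "t < t1" "\<bar>x + xs t\<bar> < pi" for t x
  proof (rule ccontr)
    assume "\<not> ?thesis"
    then have "(t, x + xs t) \<in> S" using that t1r by (intro inS) auto
    then have "t1 \<le> t" using t1min by force
    then show False using that by simp
  qed
  have om: "x \<in> Omega x0 t \<longleftrightarrow> \<bar>x + xs t\<bar> \<le> pi" for x t by (simp add: omega_iff xs_def)
  have io: "x \<in> interior (Omega x0 t) \<longleftrightarrow> \<bar>x + xs t\<bar> < pi" for x t by (simp add: interior_omega_iff xs_def)
  have xs0: "xs 0 = x0" using xstar_0[OF x0pi] by (simp add: xs_def)
  have G1': "\<bar>eps t1 x1\<bar> \<ge> Phi t1 x1" using G1 by (simp add: G_def E_def x1_def)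
  have t1pos: "0 < t1"
  proof (rule ccontr)
    assume "\<not> 0 < t1"
    then have t10: "t1 = 0" using t1r by simp
    have "x1 \<in> Omega x0 0" using y1 t10 x1y by (simp add: om)
    then have "\<bar>eps 0 x1\<bar> \<le> m * Wf x1" using init at0 by simp
    moreover have "Phi 0 x1 = (m + eta) * Wf x1 + eta * bet y1" using x1y t10 by (simp add: Phi_def)
    moreover have "eta * Wf x1 \<ge> 0" using eta Wf_nonneg[of x1] by simp
    moreover have "eta * bet y1 > 0" using eta bet_ge1[OF y1] by simp
    ultimately show False using G1' t10 by (simp add: algebra_simps)
  qed
  have x1int: "x1 \<in> interior (Omega x0 t1)" using y1 x1y by (simp add: io)
  have Phi_isCont: "isCont (\<lambda>s. Phi s x) t1" if "\<bar>x + xs t1\<bar> < pi" for x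
    unfolding Phi_def bet_def using cos_half_pos[OF that]
    by (intro continuous_intros xs_isCont) auto
  have EV: "eventually (\<lambda>s. \<bar>eps s x\<bar> < Phi s x) (at_left t1)" if "\<bar>x + xs t1\<bar> < pi" for x
  proof -
    have "isCont (\<lambda>s. \<bar>x + xs s\<bar>) t1" by (intro continuous_intros xs_isCont)
    then have "((\<lambda>s. \<bar>x + xs s\<bar>) \<longlongrightarrow> \<bar>x + xs t1\<bar>) (at t1)" by (simp add: isCont_def)
    then have "eventually (\<lambda>s. \<bar>x + xs s\<bar> < pi) (at t1)" using that by (rule order_tendstoD(2))
    then have e1: "eventually (\<lambda>s. \<bar>x + xs s\<bar> < pi) (at_left t1)" by (simp add: eventually_at_split)
    have e2: "eventually (\<lambda>s. s \<in> {0<..<t1}) (at_left t1)" using t1pos by (rule eventually_at_left_real)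
    show ?thesis using e1 e2
    proof eventually_elim
      case (elim s)
      then have "0 \<le> s" "s < t1" "\<bar>x + xs s\<bar> < pi" by auto
      then show ?case by (rule V)
    qed
  qed
  have P1: "\<bar>eps t1 x\<bar> \<le> Phi t1 x" if hx: "\<bar>x + xs t1\<bar> < pi" for x
  proof -
    obtain et ex where d: "((\<lambda>s. eps s x) has_real_derivative et) (at t1)" using pde[rule_format, OF t1pos, of x] hx by (auto simp: io)
    have c1: "isCont (\<lambda>s. eps s x) t1" using d by (rule DERIV_isCont)
    have "((\<lambda>s. Phi s x - \<bar>eps s x\<bar>) \<longlongrightarrow> Phi t1 x - \<bar>eps t1 x\<bar>) (at t1)"
      using c1 Phi_isCont[OF that] by (intro tendsto_intros) (simp_all add: isCont_def)
    then have lim: "((\<lambda>s. Phi s x - \<bar>eps s x\<bar>) \<longlongrightarrow> Phi t1 x - \<bar>eps t1 x\<bar>) (at_left t1)"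
      by (simp add: filterlim_at_split)
    have "eventually (\<lambda>s. 0 \<le> Phi s x - \<bar>eps s x\<bar>) (at_left t1)"
      using EV[OF that] by eventually_elim simp
    from tendsto_lowerbound[OF lim this] show ?thesis by simp
  qed
  have eq1: "\<bar>eps t1 x1\<bar> = Phi t1 x1" using G1' P1[of x1] x1y y1 by simp
  define sg where "sg = (if eps t1 x1 \<ge> 0 then 1 else -1::real)"
  have sg1: "sg * eps t1 x1 = Phi t1 x1" using eq1 unfolding sg_def by (cases "eps t1 x1 \<ge> 0") (simp_all add: abs_of_nonneg abs_of_neg)
  have sg2: "sg * v \<le> \<bar>v\<bar>" for v using abs_ge_self[of v] abs_ge_minus_self[of v] by (simp add: sg_def)
  have sg3: "\<bar>sg\<bar> = 1" by (simp add: sg_def)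
  obtain et ex where det: "((\<lambda>s. eps s x1) has_real_derivative et) (at t1)"
    and dex: "((\<lambda>y. eps t1 y) has_real_derivative ex) (at x1)" and L: "et = Lop (eps t1) ex x1"
    using pde[rule_format, OF t1pos x1int] by auto
  define A where "A = exp (- lam * t1) * (m + eta)"
  define B where "B = eta * exp (13 * t1)"
  have A0: "0 \<le> A" using m eta by (simp add: A_def)
  have B0: "0 < B" using eta by (simp add: B_def)
  have xst1: "\<bar>xs t1\<bar> \<le> 1/10" using xsb t1r by simp
  have Phi1: "Phi t1 u = A * Wf u + B * bet (u + xs t1)" for u by (simp add: Phi_def A_def B_def)
  define Phit where "Phit = - lam * A * Wf x1 + B * (13 * bet y1 + bd y1 * (- sin (xs t1)))"
  define Phix where "Phix = A * Wd x1 + B * bd y1"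
  have bd0: "(bet has_real_derivative bd y1) (at (x1 + xs t1))" using bet_deriv[OF y1, of UNIV] x1y by simp
  have dPt: "((\<lambda>s. Phi s x1) has_real_derivative Phit) (at t1)"
  proof -
    have dxs: "((\<lambda>s. x1 + xs s) has_real_derivative (0 + - sin (xs t1))) (at t1)"
      unfolding xs_def by (intro DERIV_add DERIV_const xstar_deriv)
    have d3: "((\<lambda>s. bet (x1 + xs s)) has_real_derivative bd y1 * (0 + - sin (xs t1))) (at t1)"
      using DERIV_chain2[where f=bet and g="\<lambda>s. x1 + xs s" and x=t1, OF bd0 dxs] by simp
    have d1: "((\<lambda>s. exp (- lam * s) * (m + eta) * Wf x1) has_real_derivative - lam * A * Wf x1) (at t1)"
      unfolding A_def by (auto intro!: derivative_eq_intros simp: algebra_simps)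
    have d2: "((\<lambda>s. eta * exp (13 * s)) has_real_derivative 13 * B) (at t1)"
      unfolding B_def by (auto intro!: derivative_eq_intros simp: algebra_simps)
    have "((\<lambda>s. exp (- lam * s) * (m + eta) * Wf x1 + eta * exp (13 * s) * bet (x1 + xs s)) has_real_derivative
       - lam * A * Wf x1 + (13 * B * bet (x1 + xs t1) + bd y1 * (0 + - sin (xs t1)) * (eta * exp (13 * t1)))) (at t1)"
      by (rule DERIV_add[OF d1 DERIV_mult[OF d2 d3]])
    then show ?thesis unfolding Phi_def Phit_def using x1y by (simp add: B_def algebra_simps)
  qed
  have dPx: "((\<lambda>x. Phi t1 x) has_real_derivative Phix) (at x1)"
  proof -
    have dx: "((\<lambda>x. x + xs t1) has_real_derivative (1 + 0)) (at x1)" by (intro DERIV_add DERIV_ident DERIV_const)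
    have d3: "((\<lambda>x. bet (x + xs t1)) has_real_derivative bd y1 * (1 + 0)) (at x1)"
      using DERIV_chain2[where f=bet and g="\<lambda>x. x + xs t1" and x=x1, OF bd0 dx] by simp
    have d1: "((\<lambda>x. A * Wf x) has_real_derivative A * Wd x1) (at x1)"
      by (intro DERIV_cmult Wf_deriv)
    have "((\<lambda>x. A * Wf x + B * bet (x + xs t1)) has_real_derivative A * Wd x1 + B * (bd y1 * (1 + 0))) (at x1)"
      by (rule DERIV_add[OF d1 DERIV_cmult[OF d3]])
    then show ?thesis unfolding Phi1 Phix_def by simp
  qed
  have spatial: "sg * ex - Phix = 0"
  proof (rule DERIV_local_max)
    show "((\<lambda>x. sg * eps t1 x - Phi t1 x) has_real_derivative sg * ex - Phix) (at x1)"
      by (intro DERIV_diff DERIV_cmult dex dPx)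
    show "0 < pi - \<bar>y1\<bar>" using y1 by simp
    show "\<forall>y. \<bar>x1 - y\<bar> < pi - \<bar>y1\<bar> \<longrightarrow> sg * eps t1 y - Phi t1 y \<le> sg * eps t1 x1 - Phi t1 x1"
    proof (intro allI impI)
      fix y assume "\<bar>x1 - y\<bar> < pi - \<bar>y1\<bar>"
      then have "\<bar>y + xs t1\<bar> < pi" using x1y by linarith
      then show "sg * eps t1 y - Phi t1 y \<le> sg * eps t1 x1 - Phi t1 x1"
        using P1 sg1 sg2[of "eps t1 y"] by fastforce
    qed
  qed
  have temporal: "sg * et - Phit \<ge> 0"
  proof (rule ccontr)
    assume "\<not> ?thesis"
    then have neg: "sg * et - Phit < 0" by simp
    have "((\<lambda>s. sg * eps s x1 - Phi s x1) has_real_derivative sg * et - Phit) (at t1)"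
      by (intro DERIV_diff DERIV_cmult det dPt)
    from DERIV_neg_dec_left[OF this neg] obtain d where d: "d > 0"
      and dd: "\<forall>h>0. h < d \<longrightarrow> sg * eps t1 x1 - Phi t1 x1 < sg * eps (t1 - h) x1 - Phi (t1 - h) x1" by blast
    have e1: "eventually (\<lambda>s. s \<in> {t1 - d<..<t1}) (at_left t1)" using d by (intro eventually_at_left_real) simp
    have "eventually (\<lambda>s. False) (at_left t1)"
      using e1 EV[of x1] x1y y1
    proof -
      have x1r: "\<bar>x1 + xs t1\<bar> < pi" using x1y y1 by simp
      show ?thesis using e1 EV[OF x1r]
    proof eventually_elim
      case (elim s)
      then have "0 < sg * eps s x1 - Phi s x1" using dd[rule_format, of "t1 - s"] sg1 by auto
      moreover have "sg * eps s x1 \<le> \<bar>eps s x1\<bar>" by (rule sg2)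
      ultimately show False using elim by linarith
    qed
    qed
    then show False by simp
  qed
  define I where "I = (LBINT u=0..x1. eps t1 u)"
  have Lx: "et = 2 * cos x1 * eps t1 x1 - sin x1 * ex + sin x1 * I" using L by (simp add: Lop_def I_def)
  define J where "J = integral {min 0 x1..max 0 x1} (\<lambda>u. A * Wf u + B * (2 * bet y1))"
  have seg: "\<bar>u + xs t1\<bar> \<le> max \<bar>xs t1\<bar> \<bar>y1\<bar>" if "u \<in> {min 0 x1..max 0 x1}" for u
    using that x1y by (auto simp: min_def max_def split: if_splits)
  have IJ: "\<bar>I\<bar> \<le> J" unfolding I_def J_def
  proof (rule lbint_bound)
    have "continuous_on {min 0 x1..max 0 x1} (\<lambda>u. (\<lambda>(t, x). eps t x) (t1, u))"
      apply (rule continuous_on_compose2[OF cont])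
       apply (intro continuous_intros)
      using seg y1 xst1 pi_gt3 t1r by (fastforce simp: om)
    then show "continuous_on {min 0 x1..max 0 x1} (eps t1)" by simp
    show "continuous_on {min 0 x1..max 0 x1} (\<lambda>u. A * Wf u + B * (2 * bet y1))"
      by (intro continuous_intros Wf_cont)
    fix u assume u: "u \<in> {min 0 x1..max 0 x1}"
    have uu: "\<bar>u + xs t1\<bar> < pi" using seg[OF u] y1 xst1 pi_gt3 by linarith
    have "bet (u + xs t1) \<le> 2 * bet y1"
    proof (cases "\<bar>u + xs t1\<bar> \<le> \<bar>y1\<bar>")
      case True
      then show ?thesis using bet_mono[OF True y1] bet_ge1[OF y1] by linarith
    next
      case False
      then have "\<bar>u + xs t1\<bar> \<le> 1/10" using seg[OF u] xst1 by linarith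
      then show ?thesis using bet_small bet_ge1[OF y1] by fastforce
    qed
    then have "Phi t1 u \<le> A * Wf u + B * (2 * bet y1)" unfolding Phi1 using B0 by simp
    then show "\<bar>eps t1 u\<bar> \<le> A * Wf u + B * (2 * bet y1)" using P1[OF uu] by linarith
  qed
  have Jv: "J = A * integral {min 0 x1..max 0 x1} Wf + B * (2 * \<bar>x1\<bar> * bet y1)"
  proof -
    have iW: "Wf integrable_on {min 0 x1..max 0 x1}" by (intro integrable_continuous_real Wf_cont)
    have "J = integral {min 0 x1..max 0 x1} (\<lambda>u. A * Wf u) + integral {min 0 x1..max 0 x1} (\<lambda>u. B * (2 * bet y1))"
    proof -
      have iA: "(\<lambda>u. A * Wf u) integrable_on {min 0 x1..max 0 x1}" by (intro integrable_continuous_real continuous_intros Wf_cont)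
      have iC: "(\<lambda>u. B * (2 * bet y1)) integrable_on {min 0 x1..max 0 x1}" by (intro integrable_continuous_real continuous_intros)
      show ?thesis unfolding J_def by (rule integral_add[OF iA iC])
    qed
    also have "\<dots> = A * integral {min 0 x1..max 0 x1} Wf + (max 0 x1 - min 0 x1) * (B * (2 * bet y1))" by simp
    finally show ?thesis by (simp add: min_def max_def)
  qed
  have sup: "2 * cos x1 * (A * Wf x1 + B * bet y1) - sin x1 * (A * Wd x1 + B * bd y1)
     + \<bar>sin x1\<bar> * (A * integral {min 0 x1..max 0 x1} Wf + B * (2 * \<bar>x1\<bar> * bet y1)) < Phit"
    using super[OF xst1 y1 lam A0 B0] unfolding Phit_def by (simp add: x1_def)
  have "sg * et = 2 * cos x1 * (sg * eps t1 x1) - sin x1 * (sg * ex) + sin x1 * (sg * I)"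
    unfolding Lx by (simp add: algebra_simps)
  also have "\<dots> = 2 * cos x1 * (A * Wf x1 + B * bet y1) - sin x1 * Phix + sin x1 * (sg * I)"
    using sg1 spatial Phi1[of x1] x1y by simp
  also have "sin x1 * (sg * I) \<le> \<bar>sin x1\<bar> * J"
  proof -
    have "sin x1 * (sg * I) \<le> \<bar>sin x1 * (sg * I)\<bar>" by simp
    also have "\<dots> = \<bar>sin x1\<bar> * \<bar>I\<bar>" using sg3 by (simp add: abs_mult)
    also have "\<dots> \<le> \<bar>sin x1\<bar> * J" using IJ by (intro mult_left_mono) auto
    finally show ?thesis .
  qed
  then have "2 * cos x1 * (A * Wf x1 + B * bet y1) - sin x1 * Phix + sin x1 * (sg * I)
      \<le> 2 * cos x1 * (A * Wf x1 + B * bet y1) - sin x1 * Phix + \<bar>sin x1\<bar> * J" by simp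
  finally have "sg * et < Phit" using sup unfolding Jv Phix_def by linarith
  then show False using temporal by simp
qed

lemma stepB:
  fixes x0 lam m :: real and eps0 :: "real \<Rightarrow> real" and eps :: "real \<Rightarrow> real \<Rightarrow> real"
  assumes x0: "\<bar>x0\<bar> < 1/10" and lam: "0 \<le> lam" "lam \<le> 1" and m: "0 \<le> m"
    and init: "\<forall>x\<in>Omega x0 0. \<bar>eps0 x\<bar> \<le> m * Wf x"
    and at0: "\<forall>x\<in>Omega x0 0. eps 0 x = eps0 x"
    and cont: "continuous_on {(t, x). 0 \<le> t \<and> x \<in> Omega x0 t} (\<lambda>(t, x). eps t x)"
    and pde: "\<forall>t x. 0 < t \<longrightarrow> x \<in> interior (Omega x0 t) \<longrightarrow>
           (\<exists>et ex. ((\<lambda>s. eps s x) has_real_derivative et) (at t) \<and>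
                    ((\<lambda>y. eps t y) has_real_derivative ex) (at x) \<and>
                    et = Lop (eps t) ex x)"
    and t: "0 \<le> t" and x: "x \<in> Omega x0 t"
  shows "\<bar>eps t x\<bar> \<le> exp (- lam * t) * m * Wf x"
proof -
  define xs where "xs = xstar x0 t"
  have inner: "\<bar>eps t z\<bar> \<le> exp (- lam * t) * m * Wf z" if z: "\<bar>z + xs\<bar> < pi" for z
  proof (rule field_le_epsilon)
    fix e :: real assume e: "0 < e"
    define D where "D = exp (- lam * t) * Wf z + exp (13 * t) * bet (z + xs) + 1"
    have D: "D \<ge> 1" using Wf_nonneg[of z] bet_ge1[OF z] by (simp add: D_def)
    define eta where "eta = e / D"
    have eta: "0 < eta" using e D by (simp add: eta_def)
    have "\<bar>eps t z\<bar> < exp (- lam * t) * (m + eta) * Wf z + eta * exp (13 * t) * bet (z + xs)"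
      using stepA[OF x0 lam m eta init at0 cont pde, rule_format, OF t] z by (simp add: xs_def)
    also have "\<dots> = exp (- lam * t) * m * Wf z + eta * (D - 1)" by (simp add: D_def algebra_simps)
    also have "\<dots> \<le> exp (- lam * t) * m * Wf z + e"
    proof -
      have "eta * (D - 1) \<le> eta * D" using eta by simp
      also have "\<dots> = e" using D by (simp add: eta_def)
      finally show ?thesis by simp
    qed
    finally show "\<bar>eps t z\<bar> \<le> exp (- lam * t) * m * Wf z + e" by simp
  qed
  have ab: "- pi - xs < pi - xs" by simp
  have cl: "closure {- pi - xs<..<pi - xs} = Omega x0 t" using ab by (simp add: Omega_def xs_def)
  have ce: "continuous_on (Omega x0 t) (eps t)"
  proof -
    have "continuous_on (Omega x0 t) (\<lambda>u. (\<lambda>(t, x). eps t x) (t, u))"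
      apply (rule continuous_on_compose2[OF cont])
       apply (intro continuous_intros)
      using t by auto
    then show ?thesis by simp
  qed
  define f where "f u = exp (- lam * t) * m * Wf u - \<bar>eps t u\<bar>" for u
  have cf: "continuous_on (closure {- pi - xs<..<pi - xs}) f"
    unfolding cl f_def by (intro continuous_intros Wf_cont ce)
  have xc: "x \<in> closure {- pi - xs<..<pi - xs}" using x cl by simp
  have lo: "0 \<le> f z" if "z \<in> {- pi - xs<..<pi - xs}" for z
  proof -
    have "\<bar>z + xs\<bar> < pi" using that by auto
    then show ?thesis using inner by (simp add: f_def)
  qed
  have "0 \<le> f x" by (rule continuous_ge_on_closure[OF cf xc lo])
  then have "0 \<le> exp (- lam * t) * m * Wf x - \<bar>eps t x\<bar>" by (simp add: f_def)
  then show ?thesis by simp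
qed

lemma eps0_zero:
  assumes c3: "C3_on (Omega x0 0) eps0" and bo: "eps0 \<in> O[at 0](\<lambda>x. \<bar>x\<bar> ^ 3)" and x0: "\<bar>x0\<bar> < 1/10"
  shows "eps0 0 = 0"
proof -
  have x0pi: "\<bar>x0\<bar> < pi" using x0 pi_gt3 by linarith
  have i0: "0 \<in> interior (Omega x0 0)" using xstar_0[OF x0pi] x0 pi_gt3 by (simp add: interior_omega_iff)
  obtain D where dD: "(eps0 has_real_derivative D) (at 0 within Omega x0 0)"
  proof -
    have z: "0 \<in> Omega x0 0" using i0 interior_subset by blast
    from c3 obtain f1 f2 f3 where "\<forall>x\<in>Omega x0 0. (eps0 has_real_derivative f1 x) (at x within Omega x0 0) \<and>
             (f1 has_real_derivative f2 x) (at x within Omega x0 0) \<and>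
             (f2 has_real_derivative f3 x) (at x within Omega x0 0)" unfolding C3_on_def by blast
    then have "(eps0 has_real_derivative f1 0) (at 0 within Omega x0 0)" using z by blast
    then show ?thesis by (rule that)
  qed
  have "(eps0 has_real_derivative D) (at 0)" using dD unfolding at_within_interior[OF i0] .
  then have "isCont eps0 0" by (rule DERIV_isCont)
  then have l1: "(eps0 \<longlongrightarrow> eps0 0) (at 0)" by (simp add: isCont_def)
  from bo obtain c where "c > 0" and ev: "eventually (\<lambda>x. norm (eps0 x) \<le> c * norm (\<bar>x\<bar> ^ 3)) (at (0::real))"
    using landau_o.bigE[OF bo] by blast
  have "((\<lambda>x::real. c * norm (\<bar>x\<bar> ^ 3)) \<longlongrightarrow> c * norm (\<bar>0::real\<bar> ^ 3)) (at 0)"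
    by (intro tendsto_intros)
  then have "((\<lambda>x::real. c * norm (\<bar>x\<bar> ^ 3)) \<longlongrightarrow> 0) (at 0)" by simp
  then have l2: "(eps0 \<longlongrightarrow> 0) (at 0)" using Lim_null_comparison[OF ev] by blast
  show ?thesis using LIM_unique[OF l1 l2] .
qed


lemma Wf_pos': "x \<notin> {2 * pi * of_int k | k. True} \<Longrightarrow> Wf x > 0"
  by (rule Wf_pos) auto

lemma Wf_zero_small: assumes "Wf x = 0" "\<bar>x\<bar> < 2 * pi" shows "x = 0"
proof -
  have "cos x = 1" using assms(1) by (simp add: Wf_def)
  then obtain n :: int where n: "x = of_int n * 2 * pi" using cos_one_2pi_int by blast
  show ?thesis
  proof (cases "n = 0")
    case False
    then have "\<bar>real_of_int n\<bar> \<ge> 1" by linarith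
    then have "\<bar>real_of_int n\<bar> * (2 * pi) \<ge> 1 * (2 * pi)" by (intro mult_right_mono) auto
    then have "\<bar>x\<bar> \<ge> 2 * pi" using n by (simp add: abs_mult)
    then show ?thesis using assms(2) by simp
  qed (simp add: n)
qed

theorem proposition3p1:
  fixes \<theta> :: real
  assumes "0 < \<theta>" "\<theta> < 1"
  shows "\<exists>\<delta>>0. \<exists>W :: real \<Rightarrow> real.
     (\<forall>x. W x \<ge> 0) \<and> (\<forall>x. W (x + 2 * pi) = W x) \<and> W1inf W \<and>
     W \<in> O[at 0](\<lambda>x. \<bar>x\<bar> ^ 3) \<and>
     (\<forall>x. x \<notin> {2 * pi * of_int k | k. True} \<longrightarrow> W x > 0) \<and>
     (\<forall>x0 \<epsilon>0 (\<epsilon> :: real \<Rightarrow> real \<Rightarrow> real).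
        x0 \<in> {-\<delta><..<\<delta>} \<longrightarrow>
        C3_on (Omega x0 0) \<epsilon>0 \<longrightarrow>
        \<epsilon>0 \<in> O[at 0](\<lambda>x. \<bar>x\<bar> ^ 3) \<longrightarrow>
        (\<forall>x\<in>Omega x0 0. \<epsilon> 0 x = \<epsilon>0 x) \<longrightarrow>
        continuous_on {(t, x). 0 \<le> t \<and> x \<in> Omega x0 t} (\<lambda>(t, x). \<epsilon> t x) \<longrightarrow>
        (\<forall>t x. 0 < t \<longrightarrow> x \<in> interior (Omega x0 t) \<longrightarrow>
           (\<exists>et ex. ((\<lambda>s. \<epsilon> s x) has_real_derivative et) (at t) \<and>
                    ((\<lambda>y. \<epsilon> t y) has_real_derivative ex) (at x) \<and>
                    et = Lop (\<epsilon> t) ex x)) \<longrightarrow>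
        (\<forall>t\<ge>0. wnorm (\<epsilon> t) W (Omega x0 t)
                \<le> ereal (exp (- (1 - \<theta>) * t)) * wnorm \<epsilon>0 W (Omega x0 0)))"
proof -
  have lam: "0 \<le> 1 - \<theta>" "1 - \<theta> \<le> 1" using assms by auto
  have main: "wnorm (eps t) Wf (Omega x0 t) \<le> ereal (exp (- (1 - \<theta>) * t)) * wnorm eps0 Wf (Omega x0 0)"
    if x0i: "x0 \<in> {-(1/10)<..<1/10::real}" and c3: "C3_on (Omega x0 0) eps0"
      and bo: "eps0 \<in> O[at 0](\<lambda>x. \<bar>x\<bar> ^ 3)"
      and at0: "\<forall>x\<in>Omega x0 0. eps 0 x = eps0 x"
      and cont: "continuous_on {(t, x). 0 \<le> t \<and> x \<in> Omega x0 t} (\<lambda>(t, x). eps t x)"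
      and pde: "\<forall>t x. 0 < t \<longrightarrow> x \<in> interior (Omega x0 t) \<longrightarrow>
           (\<exists>et ex. ((\<lambda>s. eps s x) has_real_derivative et) (at t) \<and>
                    ((\<lambda>y. eps t y) has_real_derivative ex) (at x) \<and>
                    et = Lop (eps t) ex x)"
      and t: "0 \<le> t"
    for x0 eps0 eps t
  proof -
    have x0: "\<bar>x0\<bar> < 1/10" using x0i by auto
    have x0pi: "\<bar>x0\<bar> < pi" using x0 pi_gt3 by linarith
    have e00: "eps0 0 = 0" by (rule eps0_zero[OF c3 bo x0])
    have z0: "0 \<in> Omega x0 0" using x0 pi_gt3 by (simp add: omega_iff xstar_0[OF x0pi])
    define N where "N = wnorm eps0 Wf (Omega x0 0)"
    have Nup: "ereal \<bar>eps0 x / Wf x\<bar> \<le> N" if "x \<in> Omega x0 0" for x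
      unfolding N_def wnorm_def using that by (rule SUP_upper)
    have N0: "N \<ge> 0" using Nup[OF z0] by (simp add: e00 zero_ereal_def)
    have ep: "exp (- (1 - \<theta>) * t) > 0" by simp
    show ?thesis
    proof (cases N)
      case PInf
      then have "ereal (exp (- (1 - \<theta>) * t)) * N = \<infinity>" using ep by simp
      then show ?thesis unfolding N_def[symmetric] by simp
    next
      case MInf
      then show ?thesis using N0 by simp
    next
      case (real m)
      have m0: "m \<ge> 0" using N0 real by simp
      have init: "\<forall>x\<in>Omega x0 0. \<bar>eps0 x\<bar> \<le> m * Wf x"
      proof
        fix x assume x: "x \<in> Omega x0 0"
        have q: "\<bar>eps0 x / Wf x\<bar> \<le> m" using Nup[OF x] real by simp
        show "\<bar>eps0 x\<bar> \<le> m * Wf x"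
        proof (cases "Wf x = 0")
          case True
          have "\<bar>x\<bar> < 2 * pi" using x x0 pi_gt3 by (simp add: omega_iff xstar_0[OF x0pi])
          then have "x = 0" using Wf_zero_small[OF True] by simp
          then show ?thesis using m0 Wf_nonneg[of 0] by (simp add: e00)
        next
          case False
          then have "Wf x > 0" using Wf_nonneg[of x] by simp
          then show ?thesis using q by (simp add: abs_divide divide_le_eq)
        qed
      qed
      have bnd: "\<bar>eps t x\<bar> \<le> exp (- (1 - \<theta>) * t) * m * Wf x" if "x \<in> Omega x0 t" for x
        using stepB[OF x0 lam m0 init at0 cont pde t that] by simp
      have "wnorm (eps t) Wf (Omega x0 t) \<le> ereal (exp (- (1 - \<theta>) * t) * m)"
        unfolding wnorm_def
      proof (rule SUP_least)
        fix x assume x: "x \<in> Omega x0 t"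
        show "ereal \<bar>eps t x / Wf x\<bar> \<le> ereal (exp (- (1 - \<theta>) * t) * m)"
        proof (cases "Wf x = 0")
          case True then show ?thesis using m0 by simp
        next
          case False
          then have "Wf x > 0" using Wf_nonneg[of x] by simp
          then show ?thesis using bnd[OF x] by (simp add: abs_divide divide_le_eq)
        qed
      qed
      then show ?thesis unfolding N_def[symmetric] using real by simp
    qed
  qed
  show ?thesis
    apply (rule exI[where x="1/10"])
    apply (intro conjI)
     apply simp
    apply (rule exI[where x=Wf])
    apply (intro conjI allI impI)
    using Wf_nonneg Wf_per Wf_W1inf Wf_bigo Wf_pos' main by auto
qed

end
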